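(* Let $R \subseteq S$ be an extension of commutative rings, where $R$ is a local ring (not necessarily Noetherian) with maximal ideal $\mathfrak m$. Then the strict closure $R^*$ of $R$ in $S$ satisfies $R^* \subseteq R + \mathfrak m S$. In particular, if $\mathfrak m S \subseteq R$, then $R$ is strictly closed in $S$.
   Context: For an extension of commutative rings $R \subseteq S$, the strict closure of $R$ in $S$ is $R^* = \{\alpha \in S \mid \alpha\otimes 1 = 1\otimes \alpha \text{ in } S\otimes_R S\}$; one says $R$ is strictly closed in $S$ if $R = R^*$. *)

theory Defs
  imports Main
begin

text \<open>The ambient ring S is a type of class comm_ring_1; the subring R is a subset.\<close>

definition subring_of :: "'a::comm_ring_1 set \<Rightarrow> bool" where
  "subring_of R \<longleftrightarrow> 0 \<in> R \<and> 1 \<in> R \<and> (\<forall>x\<in>R. \<forall>y\<in>R. x + y \<in> R \<and> x - y \<in> R \<and> x * y \<in> R)"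

definition ideal_of :: "'a::comm_ring_1 set \<Rightarrow> 'a set \<Rightarrow> bool" where
  "ideal_of R I \<longleftrightarrow> I \<subseteq> R \<and> 0 \<in> I \<and> (\<forall>x\<in>I. \<forall>y\<in>I. x + y \<in> I) \<and> (\<forall>r\<in>R. \<forall>x\<in>I. r * x \<in> I)"

definition maximal_ideal_of :: "'a::comm_ring_1 set \<Rightarrow> 'a set \<Rightarrow> bool" where
  "maximal_ideal_of R m \<longleftrightarrow> ideal_of R m \<and> m \<noteq> R \<and>
     (\<forall>I. ideal_of R I \<and> m \<subseteq> I \<longrightarrow> I = m \<or> I = R)"

definition local_ring_with :: "'a::comm_ring_1 set \<Rightarrow> 'a set \<Rightarrow> bool" where
  "local_ring_with R m \<longleftrightarrow> maximal_ideal_of R m \<and> (\<forall>I. maximal_ideal_of R I \<longrightarrow> I = m)"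

text \<open>Extension of the ideal m to S: the set mS of finite sums of products s*a, a in m.\<close>
definition ext_ideal :: "'a::comm_ring_1 set \<Rightarrow> 'a set" where
  "ext_ideal m = {x. \<exists>(n::nat) f g. (\<forall>i<n. f i \<in> m) \<and> x = (\<Sum>i<n. g i * f i)}"

definition delta :: "'b \<Rightarrow> 'b \<Rightarrow> int" where
  "delta x = (\<lambda>p. if p = x then 1 else 0)"

text \<open>Tensor product S \<otimes>_R S as the free abelian group on S \<times> S modulo the
  subgroup generated by the bilinearity and R-balancing relations.\<close>
inductive_set tensor_rel :: "'a::comm_ring_1 set \<Rightarrow> ('a \<times> 'a \<Rightarrow> int) set" for R where
  zero: "(\<lambda>_. 0) \<in> tensor_rel R"
| add: "u \<in> tensor_rel R \<Longrightarrow> v \<in> tensor_rel R \<Longrightarrow> (\<lambda>p. u p + v p) \<in> tensor_rel R"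
| neg: "u \<in> tensor_rel R \<Longrightarrow> (\<lambda>p. - u p) \<in> tensor_rel R"
| lin1: "(\<lambda>p. delta (s + s', t) p - delta (s, t) p - delta (s', t) p) \<in> tensor_rel R"
| lin2: "(\<lambda>p. delta (s, t + t') p - delta (s, t) p - delta (s, t') p) \<in> tensor_rel R"
| bal: "r \<in> R \<Longrightarrow> (\<lambda>p. delta (r * s, t) p - delta (s, r * t) p) \<in> tensor_rel R"

text \<open>Equality of pure tensors s\<otimes>t = s'\<otimes>t' in S \<otimes>_R S.\<close>
definition tensor_eq :: "'a::comm_ring_1 set \<Rightarrow> 'a \<times> 'a \<Rightarrow> 'a \<times> 'a \<Rightarrow> bool" where
  "tensor_eq R x y \<longleftrightarrow> (\<lambda>p. delta x p - delta y p) \<in> tensor_rel R"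

definition strict_closure :: "'a::comm_ring_1 set \<Rightarrow> 'a set" where
  "strict_closure R = {\<alpha>. tensor_eq R (\<alpha>, 1) (1, \<alpha>)}"

definition strictly_closed :: "'a::comm_ring_1 set \<Rightarrow> bool" where
  "strictly_closed R \<longleftrightarrow> R = strict_closure R"

end

theory Submission
  imports Defs
begin

lemma sum_split_nat: "(\<Sum>i<(n::nat)+k. h i) = (\<Sum>i<n. h i) + (\<Sum>i<k. h (n+i))"
  by (induction k) (simp_all add: add.assoc)

locale LR =
  fixes R m :: "'a::comm_ring_1 set"
  assumes sr: "subring_of R" and mx: "maximal_ideal_of R m"
begin

lemma R0: "0 \<in> R" and R1: "1 \<in> R"
  and Radd: "x \<in> R \<Longrightarrow> y \<in> R \<Longrightarrow> x + y \<in> R"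
  and Rdiff: "x \<in> R \<Longrightarrow> y \<in> R \<Longrightarrow> x - y \<in> R"
  and Rmult: "x \<in> R \<Longrightarrow> y \<in> R \<Longrightarrow> x * y \<in> R"
  using sr unfolding subring_of_def by auto

lemma Rneg1: "-1 \<in> R" using Rdiff[OF R0 R1] by simp

lemma msub: "m \<subseteq> R" and m0: "0 \<in> m"
  and madd: "x \<in> m \<Longrightarrow> y \<in> m \<Longrightarrow> x + y \<in> m"
  and mmult: "r \<in> R \<Longrightarrow> x \<in> m \<Longrightarrow> r * x \<in> m"
  and mne: "m \<noteq> R"
  and mmax: "ideal_of R I \<Longrightarrow> m \<subseteq> I \<Longrightarrow> I = m \<or> I = R"
  using mx unfolding maximal_ideal_of_def ideal_of_def by auto

lemma mmult2: "r \<in> R \<Longrightarrow> x \<in> m \<Longrightarrow> x * r \<in> m"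
  using mmult by (simp add: mult.commute)

lemma mneg: "x \<in> m \<Longrightarrow> - x \<in> m"
  using mmult[OF Rneg1] by fastforce

lemma mdiff: "x \<in> m \<Longrightarrow> y \<in> m \<Longrightarrow> x - y \<in> m"
  using madd[OF _ mneg] by (metis diff_conv_add_uminus)

lemma one_notin_m: "1 \<notin> m"
proof
  assume "1 \<in> m"
  then have "R \<subseteq> m" using mmult[of _ 1] by fastforce
  with msub mne show False by blast
qed

lemma unit_lemma:
  assumes r: "r \<in> R" "r \<notin> m"
  shows "\<exists>x\<in>m. \<exists>a\<in>R. 1 = x + a * r"
proof -
  define I where "I = {x + a * r | x a. x \<in> m \<and> a \<in> R}"
  have Iin: "x + a * r \<in> I" if "x \<in> m" "a \<in> R" for x a
    unfolding I_def using that by blast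
  have "ideal_of R I"
    unfolding ideal_of_def
  proof (intro conjI ballI)
    show "I \<subseteq> R" using msub r by (auto simp: I_def intro!: Radd Rmult)
    show "0 \<in> I" using Iin[OF m0 R0] by simp
  next
    fix x y assume "x \<in> I" "y \<in> I"
    then obtain x1 a1 x2 a2 where "x = x1 + a1 * r" "y = x2 + a2 * r" "x1 \<in> m" "x2 \<in> m" "a1 \<in> R" "a2 \<in> R"
      unfolding I_def by auto
    moreover have "x + y = (x1 + x2) + (a1 + a2) * r" using calculation by (simp add: algebra_simps)
    ultimately show "x + y \<in> I" using Iin madd Radd by metis
  next
    fix c x assume "c \<in> R" "x \<in> I"
    then obtain x1 a1 where "x = x1 + a1 * r" "x1 \<in> m" "a1 \<in> R"
      unfolding I_def by auto
    moreover have "c * x = (c * x1) + (c * a1) * r" using calculation by (simp add: algebra_simps)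
    ultimately show "c * x \<in> I" using Iin mmult Rmult \<open>c \<in> R\<close> by metis
  qed
  moreover have "m \<subseteq> I" unfolding I_def using R0 by force
  moreover have "r \<in> I" unfolding I_def using m0 R1 by force
  ultimately have "I = R" using mmax r by blast
  then have "1 \<in> I" using R1 by simp
  then obtain x a where "1 = x + a * r" "x \<in> m" "a \<in> R" unfolding I_def by blast
  then show ?thesis by blast
qed

abbreviation E where "E \<equiv> ext_ideal m"

lemma Eintro: fixes f g :: "nat \<Rightarrow> 'a"
  shows "(\<forall>i<n. f i \<in> m) \<Longrightarrow> x = (\<Sum>i<n. g i * f i) \<Longrightarrow> x \<in> ext_ideal m"
  unfolding ext_ideal_def mem_Collect_eq by (intro exI conjI)

lemma E0: "0 \<in> E" by (rule Eintro[where n=0]) simp_all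

lemma Em: assumes "x \<in> m" shows "s * x \<in> E"
proof -
  have "(\<forall>i<(1::nat). (\<lambda>_. x) i \<in> m) \<and> s * x = (\<Sum>i<(1::nat). (\<lambda>_. s) i * (\<lambda>_. x) i)"
    using assms by simp
  then show ?thesis using Eintro[where n=1 and f="\<lambda>_. x" and g="\<lambda>_. s"] by simp
qed

lemma Em2: "x \<in> m \<Longrightarrow> x * s \<in> E"
  using Em[of x s] by (simp add: mult.commute)

lemma Eadd: assumes "x \<in> E" "y \<in> E" shows "x + y \<in> E"
proof -
  obtain n :: nat and f g where 1: "\<forall>i<n. f i \<in> m" "x = (\<Sum>i<n. g i * f i)" using assms(1) unfolding ext_ideal_def mem_Collect_eq by blast
  obtain k :: nat and f' g' where 2: "\<forall>i<k. f' i \<in> m" "y = (\<Sum>i<k. g' i * f' i)" using assms(2) unfolding ext_ideal_def mem_Collect_eq by blast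
  define F where "F i = (if i < n then f i else f' (i - n))" for i
  define G where "G i = (if i < n then g i else g' (i - n))" for i
  have "(\<Sum>i<n+k. G i * F i) = (\<Sum>i<n. G i * F i) + (\<Sum>i<k. G (n+i) * F (n+i))"
    by (rule sum_split_nat)
  also have "(\<Sum>i<n. G i * F i) = (\<Sum>i<n. g i * f i)"
    by (rule sum.cong) (simp_all add: F_def G_def)
  also have "(\<Sum>i<k. G (n+i) * F (n+i)) = (\<Sum>i<k. g' i * f' i)"
    by (rule sum.cong) (simp_all add: F_def G_def)
  finally have "(\<Sum>i<n+k. G i * F i) = x + y" using 1(2) 2(2) by simp
  moreover have "\<forall>i<n+k. F i \<in> m"
  proof (intro allI impI)
    fix i assume i: "i < n + k"
    show "F i \<in> m"
    proof (cases "i < n")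
      case True then show ?thesis using 1(1) by (simp add: F_def)
    next
      case False then have "i - n < k" using i by simp
      then show ?thesis using 2(1) False by (simp add: F_def)
    qed
  qed
  ultimately show ?thesis using Eintro[where n="n+k" and f=F and g=G] by simp
qed

lemma Esmult: assumes "x \<in> E" shows "s * x \<in> E"
proof -
  obtain n :: nat and f g where 1: "\<forall>i<n. f i \<in> m" "x = (\<Sum>i<n. g i * f i)" using assms(1) unfolding ext_ideal_def mem_Collect_eq by blast
  have "s * x = (\<Sum>i<n. (s * g i) * f i)" unfolding 1 sum_distrib_left by (simp add: mult.assoc)
  with 1 show ?thesis using Eintro[where n=n and f=f and g="\<lambda>i. s * g i"] by simp
qed

definition submod :: "'a set \<Rightarrow> bool" where
  "submod N \<longleftrightarrow> 0 \<in> N \<and> (\<forall>x\<in>N. \<forall>y\<in>N. x + y \<in> N) \<and> (\<forall>r\<in>R. \<forall>x\<in>N. r * x \<in> N)"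

lemma submod_diff: "submod N \<Longrightarrow> x \<in> N \<Longrightarrow> y \<in> N \<Longrightarrow> x - y \<in> N"
proof -
  assume a: "submod N" "x \<in> N" "y \<in> N"
  then have "(-1) * y \<in> N" using Rneg1 unfolding submod_def by blast
  then have "x + (-1) * y \<in> N" using a unfolding submod_def by blast
  then show "x - y \<in> N" by simp
qed

lemma submod_0: "submod N \<Longrightarrow> 0 \<in> N" unfolding submod_def by blast
lemma submod_add: "submod N \<Longrightarrow> x \<in> N \<Longrightarrow> y \<in> N \<Longrightarrow> x + y \<in> N" unfolding submod_def by blast
lemma submod_mult: "submod N \<Longrightarrow> r \<in> R \<Longrightarrow> x \<in> N \<Longrightarrow> r * x \<in> N" unfolding submod_def by blast

lemma choose_sub:
  assumes N0: "submod N0" "E \<subseteq> N0" "\<beta> \<notin> N0"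
  shows "\<exists>N. submod N \<and> N0 \<subseteq> N \<and> \<beta> \<notin> N \<and> (\<forall>s. \<exists>r\<in>R. s - r * \<beta> \<in> N)
            \<and> (\<forall>r\<in>R. r * \<beta> \<in> N \<longrightarrow> r \<in> m)"
proof -
  define A where "A = {N. submod N \<and> N0 \<subseteq> N \<and> \<beta> \<notin> N}"
  have "\<forall>C\<in>chains A. \<exists>U\<in>A. \<forall>X\<in>C. X \<subseteq> U"
  proof
    fix C assume C: "C \<in> chains A"
    show "\<exists>U\<in>A. \<forall>X\<in>C. X \<subseteq> U"
    proof (cases "C = {}")
      case True then show ?thesis using N0 unfolding A_def by auto
    next
      case False
      have CA: "C \<subseteq> A" and ch: "\<forall>X\<in>C. \<forall>Y\<in>C. X \<subseteq> Y \<or> Y \<subseteq> X"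
        using C unfolding chains_def chain_subset_def by auto
      have Cs: "\<And>X. X \<in> C \<Longrightarrow> submod X \<and> N0 \<subseteq> X \<and> \<beta> \<notin> X" using CA unfolding A_def by blast
      have "submod (\<Union>C)" unfolding submod_def
      proof (intro conjI ballI)
        obtain X where "X \<in> C" using False by blast
        then show "0 \<in> \<Union>C" using Cs[of X] submod_0 by blast
      next
        fix x y assume "x \<in> \<Union>C" "y \<in> \<Union>C"
        then obtain X Y where XY: "X \<in> C" "Y \<in> C" "x \<in> X" "y \<in> Y" by auto
        then have "X \<subseteq> Y \<or> Y \<subseteq> X" using ch by blast
        then obtain Z where "Z \<in> C" "x \<in> Z" "y \<in> Z" using XY by blast
        then show "x + y \<in> \<Union>C" using Cs[of Z] submod_add by blast
      next
        fix r x assume "r \<in> R" "x \<in> \<Union>C"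
        then obtain X where "X \<in> C" "x \<in> X" by blast
        then show "r * x \<in> \<Union>C" using Cs[of X] submod_mult \<open>r \<in> R\<close> by blast
      qed
      moreover have "N0 \<subseteq> \<Union>C" using False Cs by blast
      moreover have "\<beta> \<notin> \<Union>C" using Cs by blast
      ultimately have "\<Union>C \<in> A" unfolding A_def by blast
      then show ?thesis by blast
    qed
  qed
  from Zorn_Lemma2[OF this] obtain M where MA: "M \<in> A" and Mmax: "\<forall>X\<in>A. M \<subseteq> X \<longrightarrow> X = M" by blast
  have sM: "submod M" and N0M: "N0 \<subseteq> M" and bM: "\<beta> \<notin> M" using MA unfolding A_def by auto
  have EM: "E \<subseteq> M" using N0 N0M by blast
  have key: "r \<in> m" if rR: "r \<in> R" and rb: "r * \<beta> \<in> M" for r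
  proof (rule ccontr)
    assume "r \<notin> m"
    then obtain x a where xa: "x \<in> m" "a \<in> R" "1 = x + a * r" using unit_lemma rR by blast
    have be: "\<beta> = x * \<beta> + a * (r * \<beta>)"
    proof -
      have "\<beta> = (x + a * r) * \<beta>" using xa(3) by simp
      then show ?thesis by (simp add: algebra_simps)
    qed
    have "x * \<beta> \<in> M" using Em2[OF xa(1)] EM by blast
    moreover have "a * (r * \<beta>) \<in> M" using submod_mult[OF sM xa(2) rb] .
    ultimately have "x * \<beta> + a * (r * \<beta>) \<in> M" using sM unfolding submod_def by blast
    with bM be show False by simp
  qed
  have "\<exists>r\<in>R. s - r * \<beta> \<in> M" for s
  proof (cases "s \<in> M")
    case True then show ?thesis using R0 by (intro bexI[of _ 0]) auto
  next
    case False
    define M' where "M' = {n + r * s | n r. n \<in> M \<and> r \<in> R}"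
    have M'in: "n + r * s \<in> M'" if "n \<in> M" "r \<in> R" for n r
      unfolding M'_def using that by blast
    have sMa: "x + y \<in> M" if "x \<in> M" "y \<in> M" for x y using sM that unfolding submod_def by blast
    have sMm: "c * x \<in> M" if "c \<in> R" "x \<in> M" for c x using sM that unfolding submod_def by blast
    have sM': "submod M'" unfolding submod_def
    proof (intro conjI ballI)
      show "0 \<in> M'" using M'in[OF _ R0, of 0] sM unfolding submod_def by simp
    next
      fix x y assume "x \<in> M'" "y \<in> M'"
      then obtain n1 r1 n2 r2 where "x = n1 + r1 * s" "y = n2 + r2 * s" "n1 \<in> M" "n2 \<in> M" "r1 \<in> R" "r2 \<in> R"
        unfolding M'_def by auto
      moreover have "x + y = (n1 + n2) + (r1 + r2) * s" using calculation by (simp add: algebra_simps)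
      ultimately show "x + y \<in> M'" using M'in sMa Radd by metis
    next
      fix c x assume "c \<in> R" "x \<in> M'"
      then obtain n1 r1 where "x = n1 + r1 * s" "n1 \<in> M" "r1 \<in> R" unfolding M'_def by auto
      moreover have "c * x = (c * n1) + (c * r1) * s" using calculation by (simp add: algebra_simps)
      ultimately show "c * x \<in> M'" using M'in sMm Rmult \<open>c \<in> R\<close> by metis
    qed
    have MM': "M \<subseteq> M'" unfolding M'_def using R0 by force
    have sM'': "s \<in> M'" unfolding M'_def using sM R1 unfolding submod_def by force
    have "\<beta> \<in> M'"
    proof (rule ccontr)
      assume "\<beta> \<notin> M'"
      then have "M' \<in> A" using sM' MM' N0M unfolding A_def by auto
      then have "M' = M" using Mmax MM' by blast
      with sM'' False show False by blast
    qed
    then obtain n r where nr: "\<beta> = n + r * s" "n \<in> M" "r \<in> R" unfolding M'_def by auto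
    have "r \<notin> m"
    proof
      assume "r \<in> m"
      then have "r * s \<in> M" using Em2 EM by blast
      then have "\<beta> \<in> M" using nr sM unfolding submod_def by blast
      with bM show False ..
    qed
    then obtain x a where xa: "x \<in> m" "a \<in> R" "1 = x + a * r" using unit_lemma nr(3) by blast
    have "s - a * \<beta> = x * s - a * n"
    proof -
      have "s = (x + a * r) * s" using xa(3) by simp
      then have "s = x * s + a * (r * s)" by (simp add: algebra_simps)
      then show ?thesis unfolding nr(1) by (simp add: algebra_simps)
    qed
    moreover have "x * s \<in> M" using Em2[OF xa(1)] EM by blast
    moreover have "a * n \<in> M" using sM xa(2) nr(2) unfolding submod_def by blast
    ultimately have "s - a * \<beta> \<in> M" using submod_diff[OF sM] by simp
    then show ?thesis using xa(2) by blast
  qed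
  then show ?thesis using sM N0M bM key by blast
qed

lemma functional:
  assumes N0: "submod N0" "E \<subseteq> N0" "\<beta> \<notin> N0"
  shows "\<exists>\<chi>. (\<forall>s. \<chi> s \<in> R) \<and> (\<forall>s s'. \<chi> (s + s') - \<chi> s - \<chi> s' \<in> m)
     \<and> (\<forall>c\<in>R. \<forall>s. c * \<chi> s - \<chi> (c * s) \<in> m) \<and> (\<forall>n\<in>N0. \<chi> n \<in> m) \<and> \<chi> \<beta> - 1 \<in> m"
proof -
  obtain N where N: "submod N" "N0 \<subseteq> N" "\<beta> \<notin> N" "\<forall>s. \<exists>r\<in>R. s - r * \<beta> \<in> N"
    "\<forall>r\<in>R. r * \<beta> \<in> N \<longrightarrow> r \<in> m"
    using choose_sub[OF N0] by blast
  define \<chi> where "\<chi> s = (SOME r. r \<in> R \<and> s - r * \<beta> \<in> N)" for s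
  have chi: "\<chi> s \<in> R \<and> s - \<chi> s * \<beta> \<in> N" for s
    using someI_ex[of "\<lambda>r. r \<in> R \<and> s - r * \<beta> \<in> N"] N(4) unfolding \<chi>_def by blast
  have uniq: "r - \<chi> s \<in> m" if "r \<in> R" "s - r * \<beta> \<in> N" for r s
  proof -
    have "(r - \<chi> s) * \<beta> = (s - \<chi> s * \<beta>) - (s - r * \<beta>)" by (simp add: algebra_simps)
    also have "\<dots> \<in> N" using submod_diff[OF N(1)] chi that by blast
    finally have "(r - \<chi> s) * \<beta> \<in> N" .
    moreover have "r - \<chi> s \<in> R" using Rdiff that(1) chi by blast
    ultimately show ?thesis using N(5) by blast
  qed
  have "\<chi> (s + s') - \<chi> s - \<chi> s' \<in> m" for s s'
  proof -
    have "(s + s') - (\<chi> s + \<chi> s') * \<beta> = (s - \<chi> s * \<beta>) + (s' - \<chi> s' * \<beta>)" by (simp add: algebra_simps)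
    also have "\<dots> \<in> N" using N(1) chi unfolding submod_def by blast
    finally have "(\<chi> s + \<chi> s') - \<chi> (s + s') \<in> m" using uniq[OF Radd[OF chi[THEN conjunct1] chi[THEN conjunct1]]] by blast
    from mneg[OF this] show ?thesis by (simp add: algebra_simps)
  qed
  moreover have "c * \<chi> s - \<chi> (c * s) \<in> m" if "c \<in> R" for c s
  proof -
    have "c * s - (c * \<chi> s) * \<beta> = c * (s - \<chi> s * \<beta>)" by (simp add: algebra_simps)
    also have "\<dots> \<in> N" using N(1) chi that unfolding submod_def by blast
    finally show ?thesis using uniq[OF Rmult[OF that chi[THEN conjunct1]]] by blast
  qed
  moreover have "\<chi> n \<in> m" if "n \<in> N0" for n
  proof -
    have "0 - \<chi> n \<in> m" using uniq[OF R0, of n] that N(2) by auto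
    from mneg[OF this] show ?thesis by simp
  qed
  moreover have "\<chi> \<beta> - 1 \<in> m"
  proof -
    have "1 - \<chi> \<beta> \<in> m" using uniq[OF R1, of \<beta>] N(1) unfolding submod_def by auto
    from mneg[OF this] show ?thesis by simp
  qed
  ultimately show ?thesis using chi by blast
qed

lemma sum_delta_B:
  assumes "finite A" "q \<in> A"
  shows "(\<Sum>p\<in>A. of_int (delta q p) * B p) = (B q :: 'a)"
proof -
  have "(\<Sum>p\<in>A. of_int (delta q p) * B p) = (\<Sum>p\<in>A. if p = q then B p else 0)"
    by (rule sum.cong) (auto simp: delta_def)
  also have "\<dots> = B q" using assms by (simp add: sum.delta')
  finally show ?thesis .
qed

lemma invariant:
  fixes \<phi> \<psi> :: "'a \<Rightarrow> 'a"
  assumes phiR: "\<forall>s. \<phi> s \<in> R" and phiA: "\<forall>s s'. \<phi> (s + s') - \<phi> s - \<phi> s' \<in> m"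
    and phiM: "\<forall>c\<in>R. \<forall>s. c * \<phi> s - \<phi> (c * s) \<in> m"
    and psiR: "\<forall>s. \<psi> s \<in> R" and psiA: "\<forall>s s'. \<psi> (s + s') - \<psi> s - \<psi> s' \<in> m"
    and psiM: "\<forall>c\<in>R. \<forall>s. c * \<psi> s - \<psi> (c * s) \<in> m"
    and u: "u \<in> tensor_rel R"
  shows "\<exists>A. finite A \<and> (\<forall>A'. finite A' \<longrightarrow> A \<subseteq> A' \<longrightarrow>
           (\<Sum>p\<in>A'. of_int (u p) * (\<phi> (fst p) * \<psi> (snd p))) \<in> m)"
  using u
proof (induction rule: tensor_rel.induct)
  case zero
  then show ?case using m0 by (intro exI[of _ "{}"]) auto
next
  case (add u v)
  then obtain A B where A: "finite A" "\<forall>A'. finite A' \<longrightarrow> A \<subseteq> A' \<longrightarrow>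
           (\<Sum>p\<in>A'. of_int (u p) * (\<phi> (fst p) * \<psi> (snd p))) \<in> m"
    and B: "finite B" "\<forall>A'. finite A' \<longrightarrow> B \<subseteq> A' \<longrightarrow>
           (\<Sum>p\<in>A'. of_int (v p) * (\<phi> (fst p) * \<psi> (snd p))) \<in> m" by blast
  show ?case
  proof (intro exI[of _ "A \<union> B"] conjI allI impI)
    show "finite (A \<union> B)" using A B by simp
    fix A' assume "finite A'" "A \<union> B \<subseteq> A'"
    then show "(\<Sum>p\<in>A'. of_int (u p + v p) * (\<phi> (fst p) * \<psi> (snd p))) \<in> m"
      using A B madd by (simp add: distrib_right sum.distrib)
  qed
next
  case (neg u)
  then obtain A where A: "finite A" "\<forall>A'. finite A' \<longrightarrow> A \<subseteq> A' \<longrightarrow>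
           (\<Sum>p\<in>A'. of_int (u p) * (\<phi> (fst p) * \<psi> (snd p))) \<in> m" by blast
  show ?case
  proof (intro exI[of _ A] conjI allI impI)
    show "finite A" by fact
    fix A' assume "finite A'" "A \<subseteq> A'"
    then show "(\<Sum>p\<in>A'. of_int (- u p) * (\<phi> (fst p) * \<psi> (snd p))) \<in> m"
      using A mneg by (simp add: sum_negf)
  qed
next
  case (lin1 s s' t)
  show ?case
  proof (intro exI[of _ "{(s + s', t), (s, t), (s', t)}"] conjI allI impI)
    fix A' :: "('a \<times> 'a) set" assume A': "finite A'" "{(s + s', t), (s, t), (s', t)} \<subseteq> A'"
    let ?B = "\<lambda>p. \<phi> (fst p) * \<psi> (snd p)"
    have "(\<Sum>p\<in>A'. of_int (delta (s + s', t) p - delta (s, t) p - delta (s', t) p) * ?B p)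
        = (\<Sum>p\<in>A'. of_int (delta (s + s', t) p) * ?B p) - (\<Sum>p\<in>A'. of_int (delta (s, t) p) * ?B p)
          - (\<Sum>p\<in>A'. of_int (delta (s', t) p) * ?B p)"
      by (simp add: left_diff_distrib sum_subtractf)
    also have "\<dots> = ?B (s + s', t) - ?B (s, t) - ?B (s', t)"
      using A' by (simp add: sum_delta_B)
    also have "\<dots> = (\<phi> (s + s') - \<phi> s - \<phi> s') * \<psi> t" by (simp add: algebra_simps)
    also have "\<dots> \<in> m" using mmult2 phiA psiR by blast
    finally show "(\<Sum>p\<in>A'. of_int (delta (s + s', t) p - delta (s, t) p - delta (s', t) p) * ?B p) \<in> m" .
  qed simp
next
  case (lin2 s t t')
  show ?case
  proof (intro exI[of _ "{(s, t + t'), (s, t), (s, t')}"] conjI allI impI)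
    fix A' :: "('a \<times> 'a) set" assume A': "finite A'" "{(s, t + t'), (s, t), (s, t')} \<subseteq> A'"
    let ?B = "\<lambda>p. \<phi> (fst p) * \<psi> (snd p)"
    have "(\<Sum>p\<in>A'. of_int (delta (s, t + t') p - delta (s, t) p - delta (s, t') p) * ?B p)
        = (\<Sum>p\<in>A'. of_int (delta (s, t + t') p) * ?B p) - (\<Sum>p\<in>A'. of_int (delta (s, t) p) * ?B p)
          - (\<Sum>p\<in>A'. of_int (delta (s, t') p) * ?B p)"
      by (simp add: left_diff_distrib sum_subtractf)
    also have "\<dots> = ?B (s, t + t') - ?B (s, t) - ?B (s, t')"
      using A' by (simp add: sum_delta_B)
    also have "\<dots> = \<phi> s * (\<psi> (t + t') - \<psi> t - \<psi> t')" by (simp add: algebra_simps)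
    also have "\<dots> \<in> m" using mmult psiA phiR by blast
    finally show "(\<Sum>p\<in>A'. of_int (delta (s, t + t') p - delta (s, t) p - delta (s, t') p) * ?B p) \<in> m" .
  qed simp
next
  case (bal r s t)
  show ?case
  proof (intro exI[of _ "{(r * s, t), (s, r * t)}"] conjI allI impI)
    fix A' :: "('a \<times> 'a) set" assume A': "finite A'" "{(r * s, t), (s, r * t)} \<subseteq> A'"
    let ?B = "\<lambda>p. \<phi> (fst p) * \<psi> (snd p)"
    have "(\<Sum>p\<in>A'. of_int (delta (r * s, t) p - delta (s, r * t) p) * ?B p)
        = (\<Sum>p\<in>A'. of_int (delta (r * s, t) p) * ?B p) - (\<Sum>p\<in>A'. of_int (delta (s, r * t) p) * ?B p)"
      by (simp add: left_diff_distrib sum_subtractf)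
    also have "\<dots> = ?B (r * s, t) - ?B (s, r * t)"
      using A' by (simp add: sum_delta_B)
    also have "\<dots> = (- (r * \<phi> s - \<phi> (r * s))) * \<psi> t + \<phi> s * (r * \<psi> t - \<psi> (r * t))"
      by (simp add: algebra_simps)
    also have "\<dots> \<in> m"
    proof (rule madd)
      show "(- (r * \<phi> s - \<phi> (r * s))) * \<psi> t \<in> m"
        using mmult2[OF _ mneg] phiM psiR bal.hyps by blast
      show "\<phi> s * (r * \<psi> t - \<psi> (r * t)) \<in> m"
        using mmult phiR psiM bal.hyps by blast
    qed
    finally show "(\<Sum>p\<in>A'. of_int (delta (r * s, t) p - delta (s, r * t) p) * ?B p) \<in> m" .
  qed simp
qed

lemma main:
  assumes "\<alpha> \<notin> {r + y | r y. r \<in> R \<and> y \<in> E}"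
  shows "\<not> tensor_eq R (\<alpha>, 1) (1, \<alpha>)"
proof
  assume te: "tensor_eq R (\<alpha>, 1) (1, \<alpha>)"
  have aE: "\<alpha> \<notin> E"
  proof
    assume "\<alpha> \<in> E"
    then have "\<alpha> \<in> {r + y | r y. r \<in> R \<and> y \<in> E}" using R0 by (metis (mono_tags, lifting) add_0 mem_Collect_eq)
    with assms show False by blast
  qed
  have Esub: "submod E" unfolding submod_def using E0 Eadd Esmult by blast
  define N1 where "N1 = {y + r * \<alpha> | y r. y \<in> E \<and> r \<in> R}"
  have N1in: "y + r * \<alpha> \<in> N1" if "y \<in> E" "r \<in> R" for y r unfolding N1_def using that by blast
  have sN1: "submod N1" unfolding submod_def
  proof (intro conjI ballI)
    show "0 \<in> N1" using N1in[OF E0 R0] by simp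
  next
    fix x y assume "x \<in> N1" "y \<in> N1"
    then obtain n1 r1 n2 r2 where "x = n1 + r1 * \<alpha>" "y = n2 + r2 * \<alpha>" "n1 \<in> E" "n2 \<in> E" "r1 \<in> R" "r2 \<in> R"
      unfolding N1_def by blast
    moreover have "x + y = (n1 + n2) + (r1 + r2) * \<alpha>" using calculation by (simp add: algebra_simps)
    ultimately show "x + y \<in> N1" using N1in Eadd Radd by metis
  next
    fix c x assume "c \<in> R" "x \<in> N1"
    then obtain n1 r1 where "x = n1 + r1 * \<alpha>" "n1 \<in> E" "r1 \<in> R" unfolding N1_def by blast
    moreover have "c * x = (c * n1) + (c * r1) * \<alpha>" using calculation by (simp add: algebra_simps)
    ultimately show "c * x \<in> N1" using N1in Esmult Rmult \<open>c \<in> R\<close> by metis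
  qed
  have EN1: "E \<subseteq> N1" unfolding N1_def using R0 by force
  have aN1: "\<alpha> \<in> N1" unfolding N1_def using E0 R1 by force
  have oneN1: "1 \<notin> N1"
  proof
    assume "1 \<in> N1"
    then obtain y r where yr: "1 = y + r * \<alpha>" "y \<in> E" "r \<in> R" unfolding N1_def by auto
    show False
    proof (cases "r \<in> m")
      case True
      then have "r * \<alpha> \<in> E" using Em2 by blast
      then have "1 \<in> E" using yr Eadd by metis
      then have "\<alpha> * 1 \<in> E" using Esmult by blast
      with aE show False by simp
    next
      case False
      then obtain x a where xa: "x \<in> m" "a \<in> R" "1 = x + a * r" using unit_lemma yr(3) by blast
      have "\<alpha> = x * \<alpha> + a * (r * \<alpha>)" by (metis xa(3) distrib_right mult.assoc mult_1)
      also have "\<dots> = a + (x * \<alpha> + (- a) * y)"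
      proof -
        have ra: "r * \<alpha> = 1 - y" using yr(1) by (simp add: algebra_simps)
        have "x * \<alpha> + a * (r * \<alpha>) = x * \<alpha> + a * (1 - y)" by (simp only: ra)
        then show ?thesis by (simp add: algebra_simps)
      qed
      finally have al: "\<alpha> = a + (x * \<alpha> + (- a) * y)" .
      have "x * \<alpha> + (- a) * y \<in> E" using Eadd[OF Em2[OF xa(1)] Esmult[OF yr(2)]] .
      then have "\<alpha> \<in> {r + y | r y. r \<in> R \<and> y \<in> E}" using al xa(2) by blast
      with assms show False by blast
    qed
  qed
  obtain \<phi> where phi: "\<forall>s. \<phi> s \<in> R" "\<forall>s s'. \<phi> (s + s') - \<phi> s - \<phi> s' \<in> m"
     "\<forall>c\<in>R. \<forall>s. c * \<phi> s - \<phi> (c * s) \<in> m" "\<forall>n\<in>N1. \<phi> n \<in> m" "\<phi> 1 - 1 \<in> m"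
    using functional[OF sN1 EN1 oneN1] by blast
  define N2 where "N2 = {y + r | y r. y \<in> E \<and> r \<in> R}"
  have N2in: "y + r \<in> N2" if "y \<in> E" "r \<in> R" for y r unfolding N2_def using that by blast
  have sN2: "submod N2" unfolding submod_def
  proof (intro conjI ballI)
    show "0 \<in> N2" using N2in[OF E0 R0] by simp
  next
    fix x y assume "x \<in> N2" "y \<in> N2"
    then obtain n1 r1 n2 r2 where "x = n1 + r1" "y = n2 + r2" "n1 \<in> E" "n2 \<in> E" "r1 \<in> R" "r2 \<in> R"
      unfolding N2_def by blast
    moreover have "x + y = (n1 + n2) + (r1 + r2)" using calculation by (simp add: algebra_simps)
    ultimately show "x + y \<in> N2" using N2in Eadd Radd by metis
  next
    fix c x assume "c \<in> R" "x \<in> N2"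
    then obtain n1 r1 where "x = n1 + r1" "n1 \<in> E" "r1 \<in> R" unfolding N2_def by blast
    moreover have "c * x = (c * n1) + (c * r1)" using calculation by (simp add: algebra_simps)
    ultimately show "c * x \<in> N2" using N2in Esmult Rmult \<open>c \<in> R\<close> by metis
  qed
  have EN2: "E \<subseteq> N2" unfolding N2_def using R0 by force
  have oneN2: "1 \<in> N2" unfolding N2_def using E0 R1 by force
  have aN2: "\<alpha> \<notin> N2"
  proof
    assume "\<alpha> \<in> N2"
    then obtain y r where "\<alpha> = y + r" "y \<in> E" "r \<in> R" unfolding N2_def by blast
    then have "\<alpha> = r + y" "r \<in> R" "y \<in> E" by (simp_all add: add.commute)
    then have "\<alpha> \<in> {r + y | r y. r \<in> R \<and> y \<in> E}" by blast
    with assms show False by blast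
  qed
  obtain \<psi> where psi: "\<forall>s. \<psi> s \<in> R" "\<forall>s s'. \<psi> (s + s') - \<psi> s - \<psi> s' \<in> m"
     "\<forall>c\<in>R. \<forall>s. c * \<psi> s - \<psi> (c * s) \<in> m" "\<forall>n\<in>N2. \<psi> n \<in> m" "\<psi> \<alpha> - 1 \<in> m"
    using functional[OF sN2 EN2 aN2] by blast
  have u: "(\<lambda>p. delta (\<alpha>, 1) p - delta (1, \<alpha>) p) \<in> tensor_rel R"
    using te unfolding tensor_eq_def .
  obtain A where A: "finite A" "\<forall>A'. finite A' \<longrightarrow> A \<subseteq> A' \<longrightarrow>
      (\<Sum>p\<in>A'. of_int (delta (\<alpha>, 1) p - delta (1, \<alpha>) p) * (\<phi> (fst p) * \<psi> (snd p))) \<in> m"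
    using invariant[OF phi(1-3) psi(1-3) u] by blast
  let ?A' = "A \<union> {(\<alpha>, 1), (1, \<alpha>)}"
  let ?B = "\<lambda>p. \<phi> (fst p) * \<psi> (snd p)"
  have "(\<Sum>p\<in>?A'. of_int (delta (\<alpha>, 1) p - delta (1, \<alpha>) p) * ?B p)
     = (\<Sum>p\<in>?A'. of_int (delta (\<alpha>, 1) p) * ?B p) - (\<Sum>p\<in>?A'. of_int (delta (1, \<alpha>) p) * ?B p)"
    by (simp add: left_diff_distrib sum_subtractf)
  also have "\<dots> = ?B (\<alpha>, 1) - ?B (1, \<alpha>)" using A(1) by (simp add: sum_delta_B)
  finally have Geq: "(\<Sum>p\<in>?A'. of_int (delta (\<alpha>, 1) p - delta (1, \<alpha>) p) * ?B p) = \<phi> \<alpha> * \<psi> 1 - \<phi> 1 * \<psi> \<alpha>" by simp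
  have "finite ?A'" using A(1) by simp
  moreover have "A \<subseteq> ?A'" by blast
  ultimately have "(\<Sum>p\<in>?A'. of_int (delta (\<alpha>, 1) p - delta (1, \<alpha>) p) * ?B p) \<in> m" using A(2) by blast
  then have G: "\<phi> \<alpha> * \<psi> 1 - \<phi> 1 * \<psi> \<alpha> \<in> m" using Geq by simp
  have m1: "\<phi> \<alpha> * \<psi> 1 \<in> m" using mmult2[OF _ phi(4)[rule_format, OF aN1]] psi(1) by blast
  have m2: "(\<phi> 1 - 1) * \<psi> \<alpha> + (\<psi> \<alpha> - 1) \<in> m" using madd[OF mmult2[OF _ phi(5)] psi(5)] psi(1) by blast
  have "1 = \<phi> \<alpha> * \<psi> 1 - (\<phi> \<alpha> * \<psi> 1 - \<phi> 1 * \<psi> \<alpha>) - ((\<phi> 1 - 1) * \<psi> \<alpha> + (\<psi> \<alpha> - 1))"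
    by (simp add: algebra_simps)
  also have "\<dots> \<in> m" using mdiff[OF mdiff[OF m1 G] m2] .
  finally show False using one_notin_m by simp
qed

end

theorem corollary2p3:
  fixes R m :: "'a::comm_ring_1 set"
  assumes "subring_of R"
    and "local_ring_with R m"
  shows "strict_closure R \<subseteq> {r + y | r y. r \<in> R \<and> y \<in> ext_ideal m}
         \<and> (ext_ideal m \<subseteq> R \<longrightarrow> strictly_closed R)"
proof -
  interpret LR R m using assms unfolding LR_def local_ring_with_def by blast
  have 1: "strict_closure R \<subseteq> {r + y | r y. r \<in> R \<and> y \<in> ext_ideal m}"
  proof
    fix x assume "x \<in> strict_closure R"
    then have "tensor_eq R (x, 1) (1, x)" unfolding strict_closure_def by simp
    then show "x \<in> {r + y | r y. r \<in> R \<and> y \<in> ext_ideal m}" using main[of x] by blast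
  qed
  have 2: "R \<subseteq> strict_closure R"
  proof
    fix r assume "r \<in> R"
    then have "(\<lambda>p. delta (r * 1, 1) p - delta (1, r * 1) p) \<in> tensor_rel R"
      by (rule tensor_rel.bal)
    then show "r \<in> strict_closure R" unfolding strict_closure_def tensor_eq_def by simp
  qed
  have 3: "strictly_closed R" if "ext_ideal m \<subseteq> R"
  proof -
    have "strict_closure R \<subseteq> R"
    proof
      fix x assume "x \<in> strict_closure R"
      then obtain r y where "x = r + y" "r \<in> R" "y \<in> ext_ideal m" using 1 by blast
      then show "x \<in> R" using that Radd by blast
    qed
    with 2 show ?thesis unfolding strictly_closed_def by blast
  qed
  show ?thesis using 1 3 by blast
qed

end
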